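(* Let an $(n,k)$ binary linear block code encode information words $\boldsymbol{b}=(b_1,\dots,b_k)\in\{0,1\}^k$ into codewords; list all $2^k$ information words as $\boldsymbol{b}^{(1)},\dots,\boldsymbol{b}^{(2^k)}$ and let $\boldsymbol{c}^{(j)}\in\{0,1\}^n$ be the codeword encoding $\boldsymbol{b}^{(j)}$. Consider the three-layer network with $n$ input neurons, $2^k$ hidden neurons and $k$ output neurons, with zero biases, defined as follows: the $n\times 2^k$ binary weight matrix $\boldsymbol{W}_1$ has $j$-th column $\boldsymbol{c}^{(j)}$; the $2^k\times k$ binary weight matrix $\boldsymbol{W}_2$ has $j$-th row $\boldsymbol{b}^{(j)}$; the hidden layer applies the scaled softmax with $\alpha=2/\sigma^2$, i.e. for input $\boldsymbol{r}\in\mathbb{R}^n$ (a row vector) the hidden output is $\boldsymbol{h}$ with $h_j=\exp(\alpha(\boldsymbol{r}\boldsymbol{W}_1)_j)/\sum_{l=1}^{2^k}\exp(\alpha(\boldsymbol{r}\boldsymbol{W}_1)_l)$; and the output layer computes $\boldsymbol{v}=\boldsymbol{h}\boldsymbol{W}_2\in\mathbb{R}^k$. The decoder sets $\hat{b}_i=1$ if $v_i>1/2$ and $\hat{b}_i=0$ if $v_i<1/2$ (either value if $v_i=1/2$). Then this decoder is bit-wise optimal: for every $\boldsymbol{r}$ and every $i=1,\dots,k$, $\hat{b}_i\in\mathrm{argmax}_{\beta\in\{0,1\}}\,p(\boldsymbol{r}\mid b_i=\beta)$. No training is required.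
   Context: Transmission model: information words $\boldsymbol{b}$ are uniformly distributed on $\{0,1\}^k$ (so all codewords are equally likely); the codeword $\boldsymbol{c}$ is mapped by BPSK to $\boldsymbol{s}$ with $s_i=2c_i-1$; the channel is additive white Gaussian noise, $\boldsymbol{r}=\boldsymbol{s}+\boldsymbol{w}$ with $w_1,\dots,w_n$ i.i.d. $\mathcal{N}(0,\sigma^2)$, so $p(\boldsymbol{r}\mid\boldsymbol{s})=\prod_{i=1}^n (2\pi\sigma^2)^{-1/2}\exp(-(r_i-s_i)^2/(2\sigma^2))$, and $p(\boldsymbol{r}\mid b_i=\beta)$ is the conditional density of $\boldsymbol{r}$ given that the $i$-th information bit equals $\beta$. A decoder is bit-wise optimal if each estimated bit $\hat{b}_i$ maximizes $p(\boldsymbol{r}\mid b_i=\beta)$ over $\beta\in\{0,1\}$ (this minimizes the bit error rate). *)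

theory Defs
  imports Complex_Main
begin

(* Bits are booleans (True = 1, False = 0). Information words are bool lists of
   length k, codewords bool lists of length n; indices are 0-based. *)

definition info_words :: "nat \<Rightarrow> bool list set" where
  "info_words k = {b. length b = k}"

(* (n,k) binary linear block code given by its encoder: GF(2)-linear map from
   {0,1}^k to {0,1}^n (xor is \<noteq> on bool). *)
definition binary_linear_code :: "nat \<Rightarrow> nat \<Rightarrow> (bool list \<Rightarrow> bool list) \<Rightarrow> bool" where
  "binary_linear_code n k enc \<longleftrightarrow>
     (\<forall>b \<in> info_words k. length (enc b) = n) \<and>
     (\<forall>b \<in> info_words k. \<forall>b' \<in> info_words k.
        enc (map2 (\<noteq>) b b') = map2 (\<noteq>) (enc (b)) (enc b'))"

definition bpsk :: "bool list \<Rightarrow> nat \<Rightarrow> real" where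
  "bpsk c i = 2 * of_bool (c ! i) - 1"

definition awgn_density :: "nat \<Rightarrow> real \<Rightarrow> (nat \<Rightarrow> real) \<Rightarrow> (nat \<Rightarrow> real) \<Rightarrow> real" where
  "awgn_density n \<sigma> r s =
     (\<Prod>l<n. (1 / sqrt (2 * pi * \<sigma>\<^sup>2)) * exp (- (r l - s l)\<^sup>2 / (2 * \<sigma>\<^sup>2)))"

(* p(r | b_i = beta) with b uniform on {0,1}^k:
   average of p(r | s(enc b)) over the information words b with b_i = beta *)
definition bit_likelihood ::
  "nat \<Rightarrow> nat \<Rightarrow> (bool list \<Rightarrow> bool list) \<Rightarrow> real \<Rightarrow> (nat \<Rightarrow> real) \<Rightarrow> nat \<Rightarrow> bool \<Rightarrow> real" where
  "bit_likelihood n k enc \<sigma> r i \<beta> =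
     (\<Sum>b \<in> {b \<in> info_words k. b ! i = \<beta>}. awgn_density n \<sigma> r (bpsk (enc b)))
       / real (card {b \<in> info_words k. b ! i = \<beta>})"

(* Weight matrices; bw enumerates the information words b^(j), j < 2^k *)
definition W1 :: "(bool list \<Rightarrow> bool list) \<Rightarrow> (nat \<Rightarrow> bool list) \<Rightarrow> nat \<Rightarrow> nat \<Rightarrow> real" where
  "W1 enc bw l j = of_bool (enc (bw j) ! l)"

definition W2 :: "(nat \<Rightarrow> bool list) \<Rightarrow> nat \<Rightarrow> nat \<Rightarrow> real" where
  "W2 bw j i = of_bool (bw j ! i)"

definition hidden_out ::
  "nat \<Rightarrow> nat \<Rightarrow> (bool list \<Rightarrow> bool list) \<Rightarrow> (nat \<Rightarrow> bool list) \<Rightarrow> real \<Rightarrow> (nat \<Rightarrow> real) \<Rightarrow> nat \<Rightarrow> real" where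
  "hidden_out n k enc bw \<sigma> r j =
     (let \<alpha> = 2 / \<sigma>\<^sup>2; z = (\<lambda>j. \<Sum>l<n. r l * W1 enc bw l j) in
      exp (\<alpha> * z j) / (\<Sum>m<2^k. exp (\<alpha> * z m)))"

definition net_out ::
  "nat \<Rightarrow> nat \<Rightarrow> (bool list \<Rightarrow> bool list) \<Rightarrow> (nat \<Rightarrow> bool list) \<Rightarrow> real \<Rightarrow> (nat \<Rightarrow> real) \<Rightarrow> nat \<Rightarrow> real" where
  "net_out n k enc bw \<sigma> r i = (\<Sum>j<2^k. hidden_out n k enc bw \<sigma> r j * W2 bw j i)"

end

theory Submission
  imports Defs
begin

lemma finite_info: "finite (info_words k)"
  unfolding info_words_def using finite_lists_length_eq[of "UNIV::bool set" k] by simp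

lemma card_half:
  assumes "i < k"
  shows "card {b \<in> info_words k. b ! i = True} = card {b \<in> info_words k. b ! i = False}"
proof -
  have "bij_betw (\<lambda>b. b[i := False]) {b \<in> info_words k. b ! i = True} {b \<in> info_words k. b ! i = False}"
    apply (rule bij_betw_byWitness[where f'="\<lambda>b. b[i := True]"])
    using assms by (auto simp: info_words_def list_update_same_conv intro!: image_eqI[where x="_[i := True]"])
  thus ?thesis by (rule bij_betw_same_card)
qed

lemma card_pos:
  assumes "i < k"
  shows "card {b \<in> info_words k. b ! i = \<beta>} > 0"
proof -
  have "replicate k \<beta> \<in> {b \<in> info_words k. b ! i = \<beta>}" using assms by (auto simp: info_words_def)
  moreover have "finite {b \<in> info_words k. b ! i = \<beta>}" using finite_info by simp
  ultimately show ?thesis using card_gt_0_iff by blast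
qed

definition EE :: "nat \<Rightarrow> real \<Rightarrow> (nat \<Rightarrow> real) \<Rightarrow> bool list \<Rightarrow> real" where
  "EE n \<sigma> r c = exp ((2 / \<sigma>\<^sup>2) * (\<Sum>l<n. r l * of_bool (c ! l)))"

lemma awgn_EE:
  assumes "\<sigma> > 0"
  shows "awgn_density n \<sigma> r (bpsk c) =
    (\<Prod>l<n. (1 / sqrt (2 * pi * \<sigma>\<^sup>2)) * exp (- (r l ^ 2 + 1) / (2 * \<sigma>\<^sup>2) - r l / \<sigma>\<^sup>2)) * EE n \<sigma> r c"
proof -
  have f: "(1 / sqrt (2 * pi * \<sigma>\<^sup>2)) * exp (- (r l - bpsk c l)\<^sup>2 / (2 * \<sigma>\<^sup>2)) =
     ((1 / sqrt (2 * pi * \<sigma>\<^sup>2)) * exp (- (r l ^ 2 + 1) / (2 * \<sigma>\<^sup>2) - r l / \<sigma>\<^sup>2)) *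
     exp ((2 / \<sigma>\<^sup>2) * (r l * of_bool (c ! l)))" for l
  proof -
    have "- (r l - bpsk c l)\<^sup>2 / (2 * \<sigma>\<^sup>2) = (- (r l ^ 2 + 1) / (2 * \<sigma>\<^sup>2) - r l / \<sigma>\<^sup>2) + (2 / \<sigma>\<^sup>2) * (r l * of_bool (c ! l))"
      using assms by (cases "c ! l") (auto simp: bpsk_def field_simps power2_eq_square)
    thus ?thesis by (simp add: exp_add)
  qed
  have e: "exp ((2 / \<sigma>\<^sup>2) * (\<Sum>l<n. r l * of_bool (c ! l))) = (\<Prod>l<n. exp ((2 / \<sigma>\<^sup>2) * (r l * of_bool (c ! l))))"
    unfolding sum_distrib_left by (rule exp_sum) simp
  show ?thesis
    unfolding awgn_density_def EE_def f prod.distrib e ..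
qed

theorem theorem2:
  fixes n k :: nat and enc :: "bool list \<Rightarrow> bool list" and bw :: "nat \<Rightarrow> bool list"
    and \<sigma> :: real and r :: "nat \<Rightarrow> real" and i :: nat and bhat :: bool
  assumes "binary_linear_code n k enc"
    and "bij_betw bw {..<2^k} (info_words k)"
    and "\<sigma> > 0"
    and "i < k"
    and "net_out n k enc bw \<sigma> r i > 1/2 \<Longrightarrow> bhat"
    and "net_out n k enc bw \<sigma> r i < 1/2 \<Longrightarrow> \<not> bhat"
  shows "\<forall>\<beta>::bool. bit_likelihood n k enc \<sigma> r i \<beta> \<le> bit_likelihood n k enc \<sigma> r i bhat"
proof -
  define K where "K = (\<Prod>l<n. (1 / sqrt (2 * pi * \<sigma>\<^sup>2)) * exp (- (r l ^ 2 + 1) / (2 * \<sigma>\<^sup>2) - r l / \<sigma>\<^sup>2))"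
  have Kpos: "K > 0" unfolding K_def using assms(3) by (intro prod_pos) auto
  define S where "S \<beta> = (\<Sum>b \<in> {b \<in> info_words k. b ! i = \<beta>}. EE n \<sigma> r (enc b))" for \<beta>
  define N where "N = real (card {b \<in> info_words k. b ! i = True})"
  have Npos: "N > 0" unfolding N_def using card_pos[OF assms(4), of True] by simp
  have L: "bit_likelihood n k enc \<sigma> r i \<beta> = K * S \<beta> / N" for \<beta>
  proof -
    have c: "real (card {b \<in> info_words k. b ! i = \<beta>}) = N"
      unfolding N_def using card_half[OF assms(4)] by (cases \<beta>) auto
    show ?thesis unfolding bit_likelihood_def c S_def awgn_EE[OF assms(3)] K_def
      by (simp add: sum_distrib_left)
  qed
  have Spos: "S \<beta> > 0" for \<beta>
    unfolding S_def using card_pos[OF assms(4), of \<beta>] finite_info[of k]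
    by (intro sum_pos) (auto simp: EE_def card_gt_0_iff)
  have reidx: "(\<Sum>j<2^k. f (bw j)) = (\<Sum>b\<in>info_words k. f b)" for f :: "bool list \<Rightarrow> real"
    using sum.reindex_bij_betw[OF assms(2), of f] by simp
  have sumsplit: "(\<Sum>b\<in>info_words k. EE n \<sigma> r (enc b)) = S True + S False"
  proof -
    have "info_words k = {b \<in> info_words k. b ! i = True} \<union> {b \<in> info_words k. b ! i = False}" by auto
    then have "(\<Sum>b\<in>info_words k. EE n \<sigma> r (enc b)) = (\<Sum>b\<in>{b \<in> info_words k. b ! i = True} \<union> {b \<in> info_words k. b ! i = False}. EE n \<sigma> r (enc b))" by simp
    also have "\<dots> = S True + S False" unfolding S_def
      by (rule sum.union_disjoint) (use finite_info in auto)
    finally show ?thesis .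
  qed
  have num: "(\<Sum>b\<in>info_words k. EE n \<sigma> r (enc b) * of_bool (b ! i)) = S True"
    unfolding S_def apply (simp add: sum.inter_filter[symmetric] finite_info of_bool_def if_distrib[where f="\<lambda>x. _ * x"] sum.If_cases)
    by (rule sum.cong) auto
  have v: "net_out n k enc bw \<sigma> r i = S True / (S True + S False)"
  proof -
    have h: "hidden_out n k enc bw \<sigma> r j = EE n \<sigma> r (enc (bw j)) / (\<Sum>b\<in>info_words k. EE n \<sigma> r (enc b))" for j
      unfolding hidden_out_def Let_def W1_def EE_def[symmetric]
      using reidx[of "\<lambda>b. EE n \<sigma> r (enc b)"] by (simp add: EE_def)
    have "net_out n k enc bw \<sigma> r i = (\<Sum>j<2^k. EE n \<sigma> r (enc (bw j)) * of_bool (bw j ! i)) / (\<Sum>b\<in>info_words k. EE n \<sigma> r (enc b))"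
      unfolding net_out_def h W2_def sum_divide_distrib by (rule sum.cong) simp_all
    also have "\<dots> = S True / (S True + S False)"
      using reidx[of "\<lambda>b. EE n \<sigma> r (enc b) * of_bool (b ! i)"] num sumsplit by simp
    finally show ?thesis .
  qed
  have key: "S \<beta> \<le> S bhat" for \<beta>
  proof (cases bhat)
    case True
    then have "\<not> net_out n k enc bw \<sigma> r i < 1/2" using assms(6) by blast
    then have "S False \<le> S True" unfolding v using Spos[of True] Spos[of False]
      by (simp add: field_simps)
    then show ?thesis using True by (cases \<beta>) auto
  next
    case False
    then have "\<not> net_out n k enc bw \<sigma> r i > 1/2" using assms(5) by blast
    then have "S True \<le> S False" unfolding v using Spos[of True] Spos[of False]
      by (simp add: field_simps)
    then show ?thesis using False by (cases \<beta>) auto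
  qed
  show ?thesis unfolding L using key Kpos Npos
    by (simp add: divide_right_mono mult_left_mono)
qed

end
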